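(* Let $r\geq 2$ be an integer, and let $G$ be a $K_{r+1}$-free finite simple graph of order $n$ without isolated vertices. If $c=\lceil(\delta(G)+1)/2\rceil$, then $$\gamma_{st}(G)\geq \frac{r}{r-1}\left(-(c-1)+\sqrt{(c-1)^2+4\,\frac{r-1}{r}\,c\,n}\right)-n.$$
   Context: A graph is $K_p$-free if it does not contain the complete graph $K_p$ as a subgraph. $\delta(G)$ is the minimum degree. For a vertex $v$, $N(v)$ is its open neighborhood. A signed total dominating function (STDF) of $G$ is a function $f:V(G)\to\{-1,1\}$ such that $\sum_{u\in N(v)}f(u)\geq 1$ for every vertex $v$; the signed total domination number $\gamma_{st}(G)$ is the minimum of $\sum_{v\in V(G)}f(v)$ over all STDFs $f$ of $G$. *)

theory Defs
  imports Complex_Main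
begin

definition simple_graph :: "'a set \<Rightarrow> ('a \<Rightarrow> 'a \<Rightarrow> bool) \<Rightarrow> bool" where
  "simple_graph V E \<longleftrightarrow> finite V \<and> (\<forall>u v. E u v \<longrightarrow> u \<in> V \<and> v \<in> V)
     \<and> (\<forall>u v. E u v \<longrightarrow> E v u) \<and> (\<forall>v. \<not> E v v)"

definition nbhd :: "'a set \<Rightarrow> ('a \<Rightarrow> 'a \<Rightarrow> bool) \<Rightarrow> 'a \<Rightarrow> 'a set" where
  "nbhd V E v = {u \<in> V. E v u}"

definition degree :: "'a set \<Rightarrow> ('a \<Rightarrow> 'a \<Rightarrow> bool) \<Rightarrow> 'a \<Rightarrow> nat" where
  "degree V E v = card (nbhd V E v)"

definition min_degree :: "'a set \<Rightarrow> ('a \<Rightarrow> 'a \<Rightarrow> bool) \<Rightarrow> nat" where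
  "min_degree V E = Min (degree V E ` V)"

definition no_isolated :: "'a set \<Rightarrow> ('a \<Rightarrow> 'a \<Rightarrow> bool) \<Rightarrow> bool" where
  "no_isolated V E \<longleftrightarrow> (\<forall>v\<in>V. nbhd V E v \<noteq> {})"

definition K_free :: "nat \<Rightarrow> 'a set \<Rightarrow> ('a \<Rightarrow> 'a \<Rightarrow> bool) \<Rightarrow> bool" where
  "K_free p V E \<longleftrightarrow> \<not> (\<exists>S. S \<subseteq> V \<and> card S = p \<and> (\<forall>u\<in>S. \<forall>v\<in>S. u \<noteq> v \<longrightarrow> E u v))"

definition is_STDF :: "'a set \<Rightarrow> ('a \<Rightarrow> 'a \<Rightarrow> bool) \<Rightarrow> ('a \<Rightarrow> int) \<Rightarrow> bool" where
  "is_STDF V E f \<longleftrightarrow> (\<forall>v\<in>V. f v = -1 \<or> f v = 1) \<and> (\<forall>v. v \<notin> V \<longrightarrow> f v = 0)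
     \<and> (\<forall>v\<in>V. (\<Sum>u\<in>nbhd V E v. f u) \<ge> 1)"

definition gamma_st :: "'a set \<Rightarrow> ('a \<Rightarrow> 'a \<Rightarrow> bool) \<Rightarrow> int" where
  "gamma_st V E = Min {(\<Sum>v\<in>V. f v) | f. is_STDF V E f}"

end

theory Submission imports Defs begin
lemma dcount:
  assumes "finite A" "finite B" "\<And>u w. E u w \<Longrightarrow> E w u"
  shows "(\<Sum>u\<in>A. card {w\<in>B. E u w}) = (\<Sum>w\<in>B. card {u\<in>A. E w u})"
proof -
  have "\<forall>j\<in>B. card {i\<in>A. E i j} = card {u\<in>A. E j u}"
    using assms(3) by (metis (no_types, lifting) Collect_cong)
  from sum_multicount_gen[OF assms(1,2) this] show ?thesis .
qed

lemma turan:
  assumes sg: "simple_graph V E"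
  shows "S \<subseteq> V \<Longrightarrow> \<not> (\<exists>T. T \<subseteq> S \<and> card T = r + 1 \<and> (\<forall>u\<in>T. \<forall>v\<in>T. u \<noteq> v \<longrightarrow> E u v))
     \<Longrightarrow> int r * (\<Sum>v\<in>S. int (card {u\<in>S. E v u})) \<le> (int r - 1) * int (card S)^2"
proof (induction r arbitrary: S)
  case 0
  have "S = {}"
  proof (rule ccontr)
    assume "S \<noteq> {}" then obtain x where "x \<in> S" by auto
    then have "{x} \<subseteq> S \<and> card {x} = 0 + 1 \<and> (\<forall>u\<in>{x}. \<forall>v\<in>{x}. u \<noteq> v \<longrightarrow> E u v)" by auto
    with 0 show False by blast
  qed
  then show ?case by simp
next
  case (Suc r)
  have finV: "finite V" and sym: "\<And>u w. E u w \<Longrightarrow> E w u" and irr: "\<And>v. \<not> E v v"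
    using sg unfolding simple_graph_def by auto
  have finS: "finite S" using Suc.prems(1) finV finite_subset by auto
  show ?case
  proof (cases "S = {}")
    case True then show ?thesis by simp
  next
    case False
    define d where "d = (\<lambda>w. card {u\<in>S. E w u})"
    define \<Delta> where "\<Delta> = Max (d ` S)"
    have "\<Delta> \<in> d ` S" unfolding \<Delta>_def using finS False by auto
    then obtain v where vS: "v \<in> S" and dv: "d v = \<Delta>" by auto
    have dmax: "d w \<le> \<Delta>" if "w \<in> S" for w unfolding \<Delta>_def using finS that by auto
    define A where "A = {u\<in>S. E v u}"
    define B where "B = S - A"
    have AS: "A \<subseteq> S" and finA: "finite A" and finB: "finite B" and vA: "v \<notin> A"
      unfolding A_def B_def using finS irr by auto
    have cA: "card A = \<Delta>" using dv unfolding d_def A_def by simp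
    have SAB: "S = A \<union> B" "A \<inter> B = {}" unfolding B_def using AS by auto
    have cS: "card S = card A + card B" using SAB finA finB card_Un_disjoint by metis
    have split: "d u = card {w\<in>A. E u w} + card {w\<in>B. E u w}" for u
    proof -
      have "{w\<in>S. E u w} = {w\<in>A. E u w} \<union> {w\<in>B. E u w}" using SAB by auto
      moreover have "card ({w\<in>A. E u w} \<union> {w\<in>B. E u w}) = card {w\<in>A. E u w} + card {w\<in>B. E u w}"
        by (rule card_Un_disjoint) (use finA finB SAB in auto)
      ultimately show ?thesis unfolding d_def by simp
    qed
    have sumS: "(\<Sum>u\<in>S. d u) = (\<Sum>u\<in>A. d u) + (\<Sum>u\<in>B. d u)"
      using SAB finA finB sum.union_disjoint by metis
    have sumB: "(\<Sum>u\<in>B. d u) \<le> card B * \<Delta>"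
      using sum_bounded_above[of B d \<Delta>] dmax SAB by auto
    have sumA: "(\<Sum>u\<in>A. d u) = (\<Sum>u\<in>A. card {w\<in>A. E u w}) + (\<Sum>u\<in>A. card {w\<in>B. E u w})"
      by (simp add: split sum.distrib)
    have "(\<Sum>u\<in>A. card {w\<in>B. E u w}) = (\<Sum>w\<in>B. card {u\<in>A. E w u})"
      using dcount[OF finA finB] sym by blast
    also have "\<dots> \<le> (\<Sum>w\<in>B. d w)"
      by (rule sum_mono) (simp add: split)
    finally have AB: "(\<Sum>u\<in>A. card {w\<in>B. E u w}) \<le> card B * \<Delta>" using sumB by linarith
    define DA where "DA = (\<Sum>u\<in>A. card {w\<in>A. E u w})"
    have DS: "(\<Sum>u\<in>S. d u) \<le> DA + 2 * card B * \<Delta>"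
      using sumS sumA AB sumB unfolding DA_def by linarith
    have noclique: "\<not> (\<exists>T. T \<subseteq> A \<and> card T = r + 1 \<and> (\<forall>u\<in>T. \<forall>w\<in>T. u \<noteq> w \<longrightarrow> E u w))"
    proof
      assume "\<exists>T. T \<subseteq> A \<and> card T = r + 1 \<and> (\<forall>u\<in>T. \<forall>w\<in>T. u \<noteq> w \<longrightarrow> E u w)"
      then obtain T where T: "T \<subseteq> A" "card T = r + 1" "\<forall>u\<in>T. \<forall>w\<in>T. u \<noteq> w \<longrightarrow> E u w" by blast
      have finT: "finite T" using T(1) finA finite_subset by auto
      have "insert v T \<subseteq> S" using T(1) AS vS by auto
      moreover have "v \<notin> T" using T(1) vA by auto
      then have "card (insert v T) = Suc r + 1" using T(2) finT by simp
      moreover have "\<forall>u\<in>insert v T. \<forall>w\<in>insert v T. u \<noteq> w \<longrightarrow> E u w"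
        using T(1,3) sym unfolding A_def by auto
      ultimately show False using Suc.prems(2) by blast
    qed
    have IH: "int r * (\<Sum>u\<in>A. int (card {w\<in>A. E u w})) \<le> (int r - 1) * int (card A)^2"
      using Suc.IH[OF _ noclique] AS Suc.prems(1) by auto
    have IH': "int r * int DA \<le> (int r - 1) * int \<Delta>^2" using IH cA unfolding DA_def by simp
    have DS': "(\<Sum>v\<in>S. int (card {u\<in>S. E v u})) \<le> int DA + 2 * (int (card S) - int \<Delta>) * int \<Delta>"
    proof -
      have "(\<Sum>v\<in>S. int (card {u\<in>S. E v u})) = int (\<Sum>u\<in>S. d u)" unfolding d_def by simp
      also have "\<dots> \<le> int (DA + 2 * card B * \<Delta>)" using DS by linarith
      finally show ?thesis using cS cA by simp
    qed
    define X where "X = (\<Sum>v\<in>S. int (card {u\<in>S. E v u}))"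
    define p where "p = int (card S)"
    define D where "D = int \<Delta>"
    have X: "X \<le> int DA + 2 * (p - D) * D" using DS' unfolding X_def p_def D_def .
    have IH'': "int r * int DA \<le> (int r - 1) * D^2" using IH' unfolding D_def .
    show ?thesis
    proof (cases "r = 0")
      case True
      then have "D = 0" using IH'' by (simp add: D_def)
      then have "A = {}" using cA finA unfolding D_def by auto
      then have "DA = 0" unfolding DA_def by simp
      then show ?thesis using X \<open>D = 0\<close> True unfolding X_def p_def by simp
    next
      case False
      define R where "R = int r"
      have R1: "R \<ge> 1" using False unfolding R_def by simp
      have "R * (R + 1) * X \<le> (R+1) * (R * int DA) + 2 * R * (R+1) * (p - D) * D"
      proof -
        have "R * (R + 1) * X \<le> R * (R+1) * (int DA + 2 * (p - D) * D)"
          using X R1 by (intro mult_left_mono) auto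
        then show ?thesis by (simp add: algebra_simps)
      qed
      also have "\<dots> \<le> (R+1) * ((R - 1) * D^2) + 2 * R * (R+1) * (p - D) * D"
        using IH'' R1 unfolding R_def by (intro add_right_mono mult_left_mono) auto
      also have "\<dots> = R^2 * p^2 - (R * p - (R+1) * D)^2"
        by (simp add: algebra_simps power2_eq_square)
      also have "\<dots> \<le> R * (R * p^2)" by (simp add: power2_eq_square)
      finally have "R * ((R + 1) * X) \<le> R * (R * p^2)" by (simp add: algebra_simps)
      then have "(R + 1) * X \<le> R * p^2" using R1 by simp
      then show ?thesis unfolding R_def X_def p_def by (simp add: add.commute)
    qed
  qed
qed

lemma final_ineq:
  fixes p m c r :: real
  assumes r: "r \<ge> 2" and c: "c \<ge> 1" and p: "p \<ge> 0" and m: "m \<ge> 0"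
    and key: "r * (c * m + p) \<le> (r - 1) * p^2"
  shows "p - m \<ge> r / (r - 1) * (- (c - 1) + sqrt ((c - 1)^2 + 4 * ((r - 1) / r) * c * (p + m))) - (p + m)"
proof -
  define X where "X = (c - 1)^2 + 4 * ((r - 1) / r) * c * (p + m)"
  define Y where "Y = 2 * p * (r - 1) / r + (c - 1)"
  have Y0: "Y \<ge> 0" unfolding Y_def using r c p by simp
  have "Y^2 - X = 4 * (r - 1) / r^2 * ((r - 1) * p^2 - r * (c * m + p))"
    unfolding X_def Y_def using r by (simp add: field_simps power2_eq_square)
  also have "\<dots> \<ge> 0" using key r by simp
  finally have "X \<le> Y^2" by simp
  then have "sqrt X \<le> sqrt (Y^2)" by (rule real_sqrt_le_mono)
  then have sX: "sqrt X \<le> Y" using Y0 by simp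
  have pos: "r / (r - 1) > 0" using r by simp
  have "r / (r - 1) * (- (c - 1) + sqrt X) \<le> r / (r - 1) * (- (c - 1) + Y)"
    using sX pos by (intro mult_left_mono) auto
  also have "\<dots> = 2 * p" unfolding Y_def using r by (simp add: field_simps)
  finally show ?thesis unfolding X_def by simp
qed
theorem theorem3p7:
  fixes V :: "'a set" and E :: "'a \<Rightarrow> 'a \<Rightarrow> bool" and r :: nat
  assumes "r \<ge> 2"
    and "simple_graph V E"
    and "K_free (r + 1) V E"
    and "no_isolated V E"
  shows "let n = real (card V);
             c = real_of_int \<lceil>(real (min_degree V E) + 1) / 2\<rceil>
         in real_of_int (gamma_st V E) \<ge>
              real r / (real r - 1) *
                (- (c - 1) + sqrt ((c - 1)^2 + 4 * ((real r - 1) / real r) * c * n)) - n"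
proof -
  have finV: "finite V" and sym: "\<And>u w. E u w \<Longrightarrow> E w u" and irr: "\<And>v. \<not> E v v"
    and inV: "\<And>u w. E u w \<Longrightarrow> u \<in> V \<and> w \<in> V"
    using assms(2) unfolding simple_graph_def by auto
  define \<delta> where "\<delta> = min_degree V E"
  define ci where "ci = \<lceil>(real \<delta> + 1) / 2\<rceil>"
  have ci1: "ci \<ge> 1" unfolding ci_def by (simp add: le_ceiling_iff add_pos_pos)
  show ?thesis
  proof (cases "V = {}")
    case True
    have st: "is_STDF V E (\<lambda>_. 0)" unfolding is_STDF_def using True by simp
    have "{(\<Sum>v\<in>V. f v) | f. is_STDF V E f} = {0}" using True st by auto
    then have g: "gamma_st V E = 0" unfolding gamma_st_def by simp
    have "real_of_int ci - 1 \<ge> 0" using ci1 by simp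
    then show ?thesis using True g unfolding Let_def ci_def[symmetric] \<delta>_def[symmetric] by simp
  next
    case False
    define F where "F = {(\<Sum>v\<in>V. f v) | f. is_STDF V E f}"
    define f1 where "f1 = (\<lambda>v. if v \<in> V then 1 else 0 :: int)"
    have "is_STDF V E f1"
      unfolding is_STDF_def
    proof (intro conjI ballI allI impI)
      fix v assume v: "v \<in> V"
      have "nbhd V E v \<subseteq> V" unfolding nbhd_def by auto
      then have "(\<Sum>u\<in>nbhd V E v. f1 u) = int (card (nbhd V E v))" unfolding f1_def
        by (simp add: subset_iff)
      moreover have "nbhd V E v \<noteq> {}" using assms(4) v unfolding no_isolated_def by auto
      moreover have "finite (nbhd V E v)" using finV unfolding nbhd_def by auto
      ultimately show "(\<Sum>u\<in>nbhd V E v. f1 u) \<ge> 1" by (simp add: Suc_le_eq card_gt_0_iff)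
    qed (auto simp: f1_def)
    then have Fne: "F \<noteq> {}" unfolding F_def by auto
    have "F \<subseteq> {- int (card V) .. int (card V)}"
    proof
      fix x assume "x \<in> F"
      then obtain f where f: "is_STDF V E f" "x = (\<Sum>v\<in>V. f v)" unfolding F_def by auto
      have b: "-1 \<le> f v \<and> f v \<le> 1" if "v \<in> V" for v using f(1) that unfolding is_STDF_def by force
      have "(\<Sum>v\<in>V. f v) \<le> (\<Sum>v\<in>V. 1)" using b by (intro sum_mono) auto
      moreover have "(\<Sum>v\<in>V. -1) \<le> (\<Sum>v\<in>V. f v)" using b by (intro sum_mono) auto
      ultimately show "x \<in> {- int (card V) .. int (card V)}" using f(2) by simp
    qed
    then have finF: "finite F" using finite_subset by blast
    have "gamma_st V E \<in> F" unfolding gamma_st_def F_def[symmetric] using finF Fne by simp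
    then obtain f where f: "is_STDF V E f" and gf: "gamma_st V E = (\<Sum>v\<in>V. f v)"
      unfolding F_def by auto
    have fpm: "f v = -1 \<or> f v = 1" if "v \<in> V" for v using f that unfolding is_STDF_def by auto
    define P where "P = {v\<in>V. f v = 1}"
    define M where "M = {v\<in>V. f v = -1}"
    have PV: "P \<subseteq> V" and MV: "M \<subseteq> V" and finP: "finite P" and finM: "finite M"
      unfolding P_def M_def using finV by auto
    have sumsplit: "(\<Sum>v\<in>X. f v) = int (card {v\<in>X. f v = 1}) - int (card {v\<in>X. f v = -1})"
      if "X \<subseteq> V" for X
    proof -
      have finX: "finite X" using that finV finite_subset by auto
      have XU: "X = {v\<in>X. f v = 1} \<union> {v\<in>X. f v = -1}" using that fpm by auto
      have "(\<Sum>v\<in>X. f v) = (\<Sum>v\<in>{v\<in>X. f v = 1}. f v) + (\<Sum>v\<in>{v\<in>X. f v = -1}. f v)"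
        by (subst XU, rule sum.union_disjoint) (use finX in auto)
      then show ?thesis by simp
    qed
    have cVPM: "card V = card P + card M"
    proof -
      have "V = P \<union> M" using fpm unfolding P_def M_def by auto
      moreover have "P \<inter> M = {}" unfolding P_def M_def by auto
      ultimately show ?thesis using finP finM card_Un_disjoint by metis
    qed
    have gPM: "gamma_st V E = int (card P) - int (card M)"
      using gf sumsplit[of V] unfolding P_def M_def by simp
    define np where "np = (\<lambda>v. card {u\<in>P. E v u})"
    define nm where "nm = (\<lambda>v. card {u\<in>M. E v u})"
    have nb: "(\<Sum>u\<in>nbhd V E v. f u) = int (np v) - int (nm v) \<and> degree V E v = np v + nm v"
      if "v \<in> V" for v
    proof -
      have sub: "nbhd V E v \<subseteq> V" unfolding nbhd_def by auto
      have e1: "{u\<in>nbhd V E v. f u = 1} = {u\<in>P. E v u}" unfolding nbhd_def P_def by auto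
      have e2: "{u\<in>nbhd V E v. f u = -1} = {u\<in>M. E v u}" unfolding nbhd_def M_def by auto
      have NU: "nbhd V E v = {u\<in>P. E v u} \<union> {u\<in>M. E v u}" using fpm unfolding nbhd_def P_def M_def by auto
      have "card (nbhd V E v) = np v + nm v" unfolding np_def nm_def
        by (subst NU, rule card_Un_disjoint) (use finV in \<open>auto simp: P_def M_def\<close>)
      then show ?thesis using sumsplit[OF sub] e1 e2 unfolding np_def nm_def degree_def by simp
    qed
    have dle: "\<delta> \<le> degree V E v" if "v \<in> V" for v
      unfolding \<delta>_def min_degree_def using finV that by simp
    have npc: "ci \<le> int (np v)" if "v \<in> V" for v
    proof -
      have "(\<Sum>u\<in>nbhd V E v. f u) \<ge> 1" using f that unfolding is_STDF_def by auto
      then have "real \<delta> + 1 \<le> 2 * real (np v)" using nb[OF that] dle[OF that] by linarith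
      then have "(real \<delta> + 1) / 2 \<le> real (np v)" by simp
      then show ?thesis unfolding ci_def by (simp add: ceiling_le_iff)
    qed
    have nmP: "int (nm u) \<le> int (np u) - 1" if "u \<in> P" for u
    proof -
      have uV: "u \<in> V" using that PV by auto
      have "(\<Sum>w\<in>nbhd V E u. f w) \<ge> 1" using f uV unfolding is_STDF_def by auto
      then show ?thesis using nb[OF uV] by linarith
    qed
    have s1: "ci * int (card M) \<le> (\<Sum>v\<in>M. int (np v))"
    proof -
      have "(\<Sum>v\<in>M. ci) \<le> (\<Sum>v\<in>M. int (np v))" using npc MV by (intro sum_mono) auto
      then show ?thesis by (simp add: mult.commute)
    qed
    have s2: "(\<Sum>v\<in>M. np v) = (\<Sum>u\<in>P. nm u)"
      unfolding np_def nm_def using dcount[OF finM finP] sym by blast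
    have s3: "(\<Sum>u\<in>P. int (nm u)) \<le> (\<Sum>u\<in>P. int (np u) - 1)"
      using nmP by (intro sum_mono) auto
    have s2': "(\<Sum>v\<in>M. int (np v)) = (\<Sum>u\<in>P. int (nm u))"
      by (simp only: of_nat_sum[symmetric] s2)
    have noclq: "\<not> (\<exists>T. T \<subseteq> P \<and> card T = r + 1 \<and> (\<forall>u\<in>T. \<forall>v\<in>T. u \<noteq> v \<longrightarrow> E u v))"
    proof
      assume "\<exists>T. T \<subseteq> P \<and> card T = r + 1 \<and> (\<forall>u\<in>T. \<forall>v\<in>T. u \<noteq> v \<longrightarrow> E u v)"
      then obtain T where T: "T \<subseteq> P" "card T = r + 1" "\<forall>u\<in>T. \<forall>v\<in>T. u \<noteq> v \<longrightarrow> E u v" by blast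
      have "T \<subseteq> V" using T(1) PV by (rule subset_trans)
      then have "\<exists>S. S \<subseteq> V \<and> card S = r + 1 \<and> (\<forall>u\<in>S. \<forall>v\<in>S. u \<noteq> v \<longrightarrow> E u v)"
        using T(2,3) by blast
      then show False using assms(3) unfolding K_free_def by simp
    qed
    have tur: "int r * (\<Sum>v\<in>P. int (np v)) \<le> (int r - 1) * int (card P)^2"
      using turan[OF assms(2) PV noclq] unfolding np_def .
    have key0: "ci * int (card M) + int (card P) \<le> (\<Sum>v\<in>P. int (np v))"
    proof -
      have "(\<Sum>u\<in>P. int (np u) - 1) = (\<Sum>u\<in>P. int (np u)) - int (card P)"
        by (simp add: sum_subtractf)
      then show ?thesis using s1 s2' s3 by linarith
    qed
    have keyi: "int r * (ci * int (card M) + int (card P)) \<le> (int r - 1) * int (card P)^2"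
      using mult_left_mono[OF key0, of "int r"] tur by simp
    have keyr: "real r * (real_of_int ci * real (card M) + real (card P)) \<le> (real r - 1) * real (card P)^2"
    proof -
      have "real_of_int (int r * (ci * int (card M) + int (card P))) \<le> real_of_int ((int r - 1) * int (card P)^2)"
        using keyi by linarith
      then show ?thesis by simp
    qed
    have fin: "real (card P) - real (card M) \<ge> real r / (real r - 1) * (- (real_of_int ci - 1)
       + sqrt ((real_of_int ci - 1)^2 + 4 * ((real r - 1) / real r) * real_of_int ci * (real (card P) + real (card M))))
       - (real (card P) + real (card M))"
      by (rule final_ineq) (use assms(1) ci1 keyr in auto)
    show ?thesis unfolding Let_def ci_def[symmetric] \<delta>_def[symmetric] gPM cVPM
      using fin by simp
  qed
qed
end
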